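(* Suppose that $G$ is a graph on $[n]$ with $\langle G\rangle_{K_4} = K_n$, and let $1 \leqslant L \leqslant n$. Then there exists a clique $K \subset K_n$ which is internally spanned by $G$, with $L \leqslant v(K) \leqslant 3L$.
   Context: $\langle G\rangle_{K_4}$ is the closure of $G$ under the $K_4$-bootstrap process on $K_n$: repeatedly add any edge which is the only missing edge of some copy of $K_4$. A clique $K \subset K_n$ is internally spanned by $G$ if $\langle G \cap K\rangle_{K_4} = K$, where $G \cap K$ is the set of edges of $G$ with both endpoints in $V(K)$. *)

theory Defs
  imports Main
begin

text \<open>Graphs are sets of edges; an edge is a two-element vertex set.\<close>

definition complete :: "'a set \<Rightarrow> 'a set set" where
  "complete S = {{u, v} | u v. u \<in> S \<and> v \<in> S \<and> u \<noteq> v}"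

inductive_set k4_closure :: "'a set set \<Rightarrow> 'a set set" for E :: "'a set set" where
  base: "e \<in> E \<Longrightarrow> e \<in> k4_closure E"
| step: "\<lbrakk> distinct [a, b, c, d];
           {a, c} \<in> k4_closure E; {a, d} \<in> k4_closure E;
           {b, c} \<in> k4_closure E; {b, d} \<in> k4_closure E;
           {c, d} \<in> k4_closure E \<rbrakk> \<Longrightarrow> {a, b} \<in> k4_closure E"

definition restrict_graph :: "'a set set \<Rightarrow> 'a set \<Rightarrow> 'a set set" where
  "restrict_graph G S = {e \<in> G. e \<subseteq> S}"

definition internally_spanned :: "'a set set \<Rightarrow> 'a set \<Rightarrow> bool" where
  "internally_spanned G S \<longleftrightarrow> k4_closure (restrict_graph G S) = complete S"

end

theory Submission
  imports Defs
begin

lemma complete_mem: "{u,v} \<in> complete X \<longleftrightarrow> u \<in> X \<and> v \<in> X \<and> u \<noteq> v"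
  unfolding complete_def by (auto simp: doubleton_eq_iff)

lemma completeE:
  assumes "e \<in> complete X"
  obtains u v where "e = {u,v}" "u \<in> X" "v \<in> X" "u \<noteq> v"
  using assms unfolding complete_def by blast

lemma k4_mono: "E \<subseteq> F \<Longrightarrow> k4_closure E \<subseteq> k4_closure F"
proof
  fix e assume "e \<in> k4_closure E" "E \<subseteq> F"
  then show "e \<in> k4_closure F"
    by (induction rule: k4_closure.induct) (auto intro: k4_closure.intros)
qed

lemma k4_sub_complete: "E \<subseteq> complete S \<Longrightarrow> k4_closure E \<subseteq> complete S"
proof
  fix e assume "e \<in> k4_closure E" "E \<subseteq> complete S"
  then show "e \<in> complete S"
    by (induction rule: k4_closure.induct) (auto simp: complete_mem)
qed

lemma merge2:
  assumes "complete X \<subseteq> k4_closure E" "complete Y \<subseteq> k4_closure E"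
    "p \<in> X" "q \<in> X" "p \<in> Y" "q \<in> Y" "p \<noteq> q"
  shows "complete (X \<union> Y) \<subseteq> k4_closure E"
proof
  fix e assume "e \<in> complete (X \<union> Y)"
  then obtain u v where e: "e = {u,v}" "u \<in> X \<union> Y" "v \<in> X \<union> Y" "u \<noteq> v"
    by (rule completeE)
  have cross: "{u',v'} \<in> k4_closure E" if "u' \<in> X" "u' \<notin> Y" "v' \<in> Y" "v' \<notin> X" for u' v'
  proof -
    have d: "distinct [u', v', p, q]" using that assms by auto
    have "{u',p} \<in> complete X" "{u',q} \<in> complete X" "{p,q} \<in> complete X"
      "{v',p} \<in> complete Y" "{v',q} \<in> complete Y"
      using that assms d by (auto simp: complete_mem)
    then show ?thesis
      using k4_closure.step[OF d] assms(1,2) by blast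
  qed
  show "e \<in> k4_closure E"
  proof (cases "u \<in> X \<and> v \<in> X \<or> u \<in> Y \<and> v \<in> Y")
    case True
    then show ?thesis using e assms by (auto simp: complete_mem subset_iff)
  next
    case False
    then have "(u \<in> X \<and> u \<notin> Y \<and> v \<in> Y \<and> v \<notin> X) \<or> (v \<in> X \<and> v \<notin> Y \<and> u \<in> Y \<and> u \<notin> X)"
      using e by blast
    then show ?thesis using cross e by (metis insert_commute)
  qed
qed

lemma ext1:
  assumes "complete X \<subseteq> k4_closure E" "a \<in> X" "c \<in> X" "a \<noteq> c"
    "{a,d} \<in> k4_closure E" "{c,d} \<in> k4_closure E" "d \<noteq> a" "d \<noteq> c"
  shows "complete (insert d X) \<subseteq> k4_closure E"
proof
  fix e assume "e \<in> complete (insert d X)"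
  then obtain u v where e: "e = {u,v}" "u \<in> insert d X" "v \<in> insert d X" "u \<noteq> v"
    by (rule completeE)
  have one: "{x,d} \<in> k4_closure E" if "x \<in> X" "x \<noteq> d" for x
  proof (cases "x = a \<or> x = c")
    case True then show ?thesis using assms by auto
  next
    case False
    have dd: "distinct [x, d, a, c]" using False that assms by auto
    have "{x,a} \<in> complete X" "{x,c} \<in> complete X" "{a,c} \<in> complete X"
      using that assms dd by (auto simp: complete_mem)
    moreover have "{d,a} \<in> k4_closure E" "{d,c} \<in> k4_closure E"
      using assms by (auto simp: insert_commute)
    ultimately show ?thesis
      using k4_closure.step[OF dd] assms(1) by blast
  qed
  show "e \<in> k4_closure E"
  proof (cases "u \<in> X \<and> v \<in> X")
    case True
    then show ?thesis using e assms by (auto simp: complete_mem subset_iff)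
  next
    case False
    then have "(u = d \<and> v \<in> X) \<or> (v = d \<and> u \<in> X)" using e by blast
    then show ?thesis using one e by (metis insert_commute)
  qed
qed

lemma restrict_mono: "A \<subseteq> B \<Longrightarrow> restrict_graph G A \<subseteq> restrict_graph G B"
  unfolding restrict_graph_def by auto

lemma merge3:
  assumes "complete A \<subseteq> k4_closure (restrict_graph G A)"
    "complete B \<subseteq> k4_closure (restrict_graph G B)"
    "complete C \<subseteq> k4_closure (restrict_graph G C)"
    "distinct [p,q,r]" "p \<in> A" "q \<in> A" "p \<in> B" "r \<in> B" "q \<in> C" "r \<in> C"
  shows "complete (A \<union> B \<union> C) \<subseteq> k4_closure (restrict_graph G (A \<union> B \<union> C))"
proof -
  let ?H = "k4_closure (restrict_graph G (A \<union> B \<union> C))"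
  have hA: "complete A \<subseteq> ?H" using assms(1) k4_mono[OF restrict_mono[of A "A \<union> B \<union> C" G]] by blast
  have hB: "complete B \<subseteq> ?H" using assms(2) k4_mono[OF restrict_mono[of B "A \<union> B \<union> C" G]] by blast
  have hC: "complete C \<subseteq> ?H" using assms(3) k4_mono[OF restrict_mono[of C "A \<union> B \<union> C" G]] by blast
  have pr: "{p,r} \<in> ?H" using hB assms by (auto simp: complete_mem)
  have qr: "{q,r} \<in> ?H" using hC assms by (auto simp: complete_mem)
  have e1: "complete (insert r A) \<subseteq> ?H"
    by (rule ext1[OF hA, of p q r]) (use assms pr qr in auto)
  have e2: "complete (insert r A \<union> B) \<subseteq> ?H"
    by (rule merge2[OF e1 hB, of p r]) (use assms in auto)
  have e3: "complete (insert r A \<union> B \<union> C) \<subseteq> ?H"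
    by (rule merge2[OF e2 hC, of q r]) (use assms in auto)
  have "insert r A \<union> B \<union> C = A \<union> B \<union> C" using assms by auto
  then show ?thesis using e3 by simp
qed


lemma two_elems:
  assumes "finite S" "2 \<le> card S"
  obtains x y where "x \<in> S" "y \<in> S" "x \<noteq> y"
proof -
  from assms obtain x where x: "x \<in> S" by fastforce
  have "card (S - {x}) \<ge> 1" using assms x by simp
  then have "S - {x} \<noteq> {}" by (metis card.empty not_one_le_zero)
  then obtain y where "y \<in> S - {x}" by blast
  then show ?thesis using that x by blast
qed

theorem lemma4p4:
  fixes G :: "nat set set" and n L :: nat
  assumes "G \<subseteq> complete {1..n}"
    and "k4_closure G = complete {1..n}"
    and "1 \<le> L" and "L \<le> n"
  shows "\<exists>S. S \<subseteq> {1..n} \<and> internally_spanned G S \<and> L \<le> card S \<and> card S \<le> 3 * L"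
proof (rule ccontr)
  assume neg: "\<not> ?thesis"
  define sp where "sp X \<longleftrightarrow> X \<subseteq> {1..n} \<and> complete X \<subseteq> k4_closure (restrict_graph G X)" for X
  have isp: "internally_spanned G X" if "sp X" for X
  proof -
    have "restrict_graph G X \<subseteq> complete X"
    proof
      fix e assume "e \<in> restrict_graph G X"
      then have "e \<in> G" "e \<subseteq> X" unfolding restrict_graph_def by auto
      then have "e \<in> complete {1..n}" using assms(1) by blast
      then obtain u v where "e = {u,v}" "u \<noteq> v" by (rule completeE)
      then show "e \<in> complete X" using \<open>e \<subseteq> X\<close> by (auto simp: complete_mem)
    qed
    then show ?thesis using that k4_sub_complete unfolding sp_def internally_spanned_def by blast
  qed
  have small: "card X < L" if "sp X" "card X \<le> 3 * L" for X
    using neg isp[OF that(1)] that sp_def by force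
  have fin: "finite X" if "sp X" for X using that unfolding sp_def by (meson finite_atLeastAtMost finite_subset)
  have m3: "sp (A \<union> B \<union> C) \<and> card (A \<union> B \<union> C) < L"
    if "sp A" "sp B" "sp C" "card A < L" "card B < L" "card C < L"
      "distinct [p,q,r]" "p \<in> A" "q \<in> A" "p \<in> B" "r \<in> B" "q \<in> C" "r \<in> C" for A B C p q r
  proof -
    have s: "sp (A \<union> B \<union> C)" using that merge3[of A G B C p q r] unfolding sp_def by auto
    have "card (A \<union> B \<union> C) \<le> card A + card B + card C"
      by (meson card_Un_le add_le_mono1 le_trans)
    then have "card (A \<union> B \<union> C) \<le> 3 * L" using that by linarith
    then show ?thesis using s small by blast
  qed
  have claim: "\<exists>S. sp S \<and> e \<subseteq> S \<and> card S < L" if "e \<in> k4_closure G" for e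
    using that
  proof (induction rule: k4_closure.induct)
    case (base e)
    have "e \<in> complete {1..n}" using assms(1) base by blast
    then obtain u v where uv: "e = {u,v}" "u \<in> {1..n}" "v \<in> {1..n}" "u \<noteq> v"
      by (rule completeE)
    have "complete e = {e}" using uv unfolding complete_def by (auto simp: doubleton_eq_iff)
    moreover have "e \<in> restrict_graph G e" using base unfolding restrict_graph_def by auto
    ultimately have "sp e" using uv unfolding sp_def by (auto intro: k4_closure.base)
    moreover have "card e \<le> 3 * L" using uv assms(3) by simp
    ultimately show ?case using small by blast
  next
    case (step a b c d)
    obtain A where A: "sp A" "{a,c} \<subseteq> A" "card A < L" using step.IH(1) by blast
    obtain B where B: "sp B" "{a,d} \<subseteq> B" "card B < L" using step.IH(2) by blast
    obtain C where C: "sp C" "{b,c} \<subseteq> C" "card C < L" using step.IH(3) by blast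
    obtain D where D: "sp D" "{b,d} \<subseteq> D" "card D < L" using step.IH(4) by blast
    obtain E where E: "sp E" "{c,d} \<subseteq> E" "card E < L" using step.IH(5) by blast
    have W1: "sp (A \<union> B \<union> E) \<and> card (A \<union> B \<union> E) < L"
      by (rule m3[of A B E a c d]) (use A B E step.hyps(1) in simp_all)
    have W2: "sp ((A \<union> B \<union> E) \<union> C \<union> D) \<and> card ((A \<union> B \<union> E) \<union> C \<union> D) < L"
      by (rule m3[of "A \<union> B \<union> E" C D c d b]) (use A B C D E W1 step.hyps(1) in simp_all)
    show ?case using W2 A C by blast
  qed
  have "sp {1}" unfolding sp_def complete_def using assms(3,4) by auto
  then have "1 < L" using small[of "{1}"] assms(3) by simp
  then have n2: "2 \<le> n" using assms(4) by simp
  have "{1,2} \<in> complete {1..n}" using n2 by (auto simp: complete_mem)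
  then obtain S1 where S1: "sp S1" "{1,2} \<subseteq> S1" "card S1 < L" using claim[of "{1,2}"] assms(2) by blast
  have "2 \<le> card S1" using card_mono[OF fin[OF S1(1)] S1(2)] by simp
  then obtain S0 where S0: "sp S0 \<and> card S0 < L \<and> 2 \<le> card S0"
    and S0max: "\<forall>Y. sp Y \<and> card Y < L \<and> 2 \<le> card Y \<longrightarrow> card Y \<le> card S0"
    using ex_has_greatest_nat[of "\<lambda>X. sp X \<and> card X < L \<and> 2 \<le> card X" S1 card L] S1 by blast
  obtain x y where xy: "x \<in> S0" "y \<in> S0" "x \<noteq> y" using two_elems fin S0 by blast
  have S0sub: "S0 \<subseteq> {1..n}" using S0 sp_def by blast
  have "\<not> {1..n} \<subseteq> S0"
  proof
    assume "{1..n} \<subseteq> S0"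
    then have "card {1..n} \<le> card S0" using fin S0 card_mono by blast
    then show False using S0 assms(4) by simp
  qed
  then obtain v where v: "v \<in> {1..n}" "v \<notin> S0" by blast
  have "x \<in> {1..n}" "y \<in> {1..n}" using xy S0sub by auto
  then have ex: "{x,v} \<in> k4_closure G" "{y,v} \<in> k4_closure G"
    using v xy assms(2) by (auto simp: complete_mem)
  obtain T1 where T1: "sp T1" "{x,v} \<subseteq> T1" "card T1 < L" using claim[OF ex(1)] by blast
  obtain T2 where T2: "sp T2" "{y,v} \<subseteq> T2" "card T2 < L" using claim[OF ex(2)] by blast
  have dxyv: "distinct [x, y, v]" using xy v by auto
  have W: "sp (S0 \<union> T1 \<union> T2) \<and> card (S0 \<union> T1 \<union> T2) < L"
    by (rule m3[of S0 T1 T2 x y v]) (use S0 T1 T2 xy v dxyv in simp_all)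
  have fW: "finite (S0 \<union> T1 \<union> T2)" using fin W by blast
  have ps: "S0 \<subset> S0 \<union> T1 \<union> T2" using v T1 by auto
  have lt: "card S0 < card (S0 \<union> T1 \<union> T2)" by (rule psubset_card_mono[OF fW ps])
  then have c2: "2 \<le> card (S0 \<union> T1 \<union> T2)" using S0 by linarith
  have "card (S0 \<union> T1 \<union> T2) \<le> card S0" using S0max W c2 by simp
  then show False using lt by simp
qed

end
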